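(* Let $\theta:=\sqrt{5-\pi^2/3}$ and define, for $(Z_1,Z_2)\in\mathbb{R}^2$ and $\delta>0$, $$E(Z_1,Z_2):=Z_1^2+Z_2^2+2Z_1,$$ $$P_\delta(Z_1,Z_2):=(1+\delta)(Z_1^2+Z_2^2)+2Z_1Z_2^2+\frac23Z_1^3+6\delta\big(|Z_1|Z_2^2+|Z_1|^3\big)-2\Big(1-\delta-\Big(\frac23+\delta\Big)\frac{21}{20}\theta Z_2\Big)Z_2^2.$$ There exist $\delta_2,\delta_3>0$ such that for any $0<\delta<\delta_2$: if $(Z_1,Z_2)\in\mathbb{R}^2$ satisfies $|E(Z_1,Z_2)|\le\delta_3$, then $$P_\delta(Z_1,Z_2)-|E(Z_1,Z_2)|^2\le0.$$ *)

theory Defs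
  imports Complex_Main
begin

definition theta :: real where
  "theta = sqrt (5 - pi^2 / 3)"

definition Efun :: "real \<Rightarrow> real \<Rightarrow> real" where
  "Efun Z1 Z2 = Z1^2 + Z2^2 + 2 * Z1"

definition Pfun :: "real \<Rightarrow> real \<Rightarrow> real \<Rightarrow> real" where
  "Pfun \<delta> Z1 Z2 = (1 + \<delta>) * (Z1^2 + Z2^2) + 2 * Z1 * Z2^2 + (2/3) * Z1^3
     + 6 * \<delta> * (\<bar>Z1\<bar> * Z2^2 + \<bar>Z1\<bar>^3)
     - 2 * (1 - \<delta> - (2/3 + \<delta>) * (21/20) * theta * Z2) * Z2^2"

end

theory Submission imports Defs "HOL-Analysis.Complex_Transcendental" begin

lemma quartic_lb:
  fixes x h c0 c1 c2 c3 c4 :: real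
  assumes "0 \<le> x" "x \<le> h"
    and "0 \<le> c0 + min 0 c1 * h + min 0 c2 * (h*h) + min 0 c3 * (h*h*h) + min 0 c4 * (h*h*h*h)"
  shows "0 \<le> c0 + c1*x + c2*x^2 + c3*x^3 + c4*x^4"
proof -
  have m: "min 0 c * h^n \<le> c * x^n" for c :: real and n :: nat
  proof (cases "c \<ge> 0")
    case True then show ?thesis using assms by (simp add: min_def)
  next
    case False
    have "x^n \<le> h^n" using assms by (simp add: power_mono)
    then show ?thesis using False by (simp add: min_def mult_left_mono_neg)
  qed
  have "min 0 c1 * h \<le> c1 * x" using m[of c1 1] by simp
  then show ?thesis using m[of c2 2] m[of c3 3] m[of c4 4] assms(3)
    by (simp add: power2_eq_square power3_eq_cube power4_eq_xxxx mult.assoc)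
qed

definition pp :: "real \<Rightarrow> real" where
  "pp t = (-36331/9600000) + (343/800)*t + (-8869/4800)*t^2 + (13/4)*t^3 + (-55/48)*t^4"

lemma pp_piece0:
  assumes "(1/8) \<le> t" "t \<le> (15/64)"
  shows "0 \<le> pp t"
proof -
  have x: "0 \<le> t - (1/8)" "t - (1/8) \<le> (7/64)" using assms by simp_all
  have "0 \<le> (16592941/614400000) + (5643/51200)*(t - (1/8)) + (-28277/38400)*(t - (1/8))^2 + (257/96)*(t - (1/8))^3 + (-55/48)*(t - (1/8))^4"
    by (rule quartic_lb[OF x]) (simp add: min_def)
  also have "\<dots> = pp t" unfolding pp_def by algebra
  finally show ?thesis .
qed

lemma pp_piece1:
  assumes "(15/64) \<le> t" "t \<le> (11/32)"
  shows "0 \<le> pp t"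
proof -
  have x: "0 \<le> t - (15/64)" "t - (15/64) \<le> (7/64)" using assms by simp_all
  have "0 \<le> (84534714461/2516582400000) + (1027909/26214400)*(t - (15/64)) + (146947/2457600)*(t - (15/64))^2 + (557/256)*(t - (15/64))^3 + (-55/48)*(t - (15/64))^4"
    by (rule quartic_lb[OF x]) (simp add: min_def)
  also have "\<dots> = pp t" unfolding pp_def by algebra
  finally show ?thesis .
qed

lemma pp_piece2:
  assumes "(11/32) \<le> t" "t \<le> (9/16)"
  shows "0 \<le> pp t"
proof -
  have x: "0 \<le> t - (11/32)" "t - (11/32) \<le> (7/32)" using assms by simp_all
  have "0 \<le> (6492475021/157286400000) + (407569/3276800)*(t - (11/32)) + (424843/614400)*(t - (11/32))^2 + (643/384)*(t - (11/32))^3 + (-55/48)*(t - (11/32))^4"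
    by (rule quartic_lb[OF x]) (simp add: min_def)
  also have "\<dots> = pp t" unfolding pp_def by algebra
  finally show ?thesis .
qed

lemma pp_piece3:
  assumes "(9/16) \<le> t" "t \<le> (1)"
  shows "0 \<le> pp t"
proof -
  have x: "0 \<le> t - (9/16)" "t - (9/16) \<le> (7/16)" using assms by simp_all
  have "0 \<le> (1145029181/9830400000) + (253667/409600)*(t - (9/16)) + (224467/153600)*(t - (9/16))^2 + (43/64)*(t - (9/16))^3 + (-55/48)*(t - (9/16))^4"
    by (rule quartic_lb[OF x]) (simp add: min_def)
  also have "\<dots> = pp t" unfolding pp_def by algebra
  finally show ?thesis .
qed

lemma pp_piece4:
  assumes "(1) \<le> t" "t \<le> (23/16)"
  shows "0 \<le> pp t"
proof -
  have x: "0 \<le> t - (1)" "t - (1) \<le> (7/16)" using assms by simp_all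
  have "0 \<le> (6541669/9600000) + (19/10)*(t - (1)) + (4931/4800)*(t - (1))^2 + (-4/3)*(t - (1))^3 + (-55/48)*(t - (1))^4"
    by (rule quartic_lb[OF x]) (simp add: min_def)
  also have "\<dots> = pp t" unfolding pp_def by algebra
  finally show ?thesis .
qed

lemma pp_piece5:
  assumes "(23/16) \<le> t" "t \<le> (15/8)"
  shows "0 \<le> pp t"
proof -
  have x: "0 \<le> t - (23/16)" "t - (23/16) \<le> (7/16)" using assms by simp_all
  have "0 \<le> (15292869181/9830400000) + (675613/409600)*(t - (23/16)) + (-313133/153600)*(t - (23/16))^2 + (-641/192)*(t - (23/16))^3 + (-55/48)*(t - (23/16))^4"
    by (rule quartic_lb[OF x]) (simp add: min_def)
  also have "\<dots> = pp t" unfolding pp_def by algebra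
  finally show ?thesis .
qed

lemma pp_nonneg:
  assumes "1/8 \<le> t" "t \<le> 15/8"
  shows "0 \<le> pp t"
  using assms pp_piece0[of t] pp_piece1[of t] pp_piece2[of t] pp_piece3[of t] pp_piece4[of t]
    pp_piece5[of t]
  by linarith

lemma theta_bounds: "0 \<le> theta" "theta \<le> 55/42"
proof -
  have p1: "3.14 \<le> pi" "pi \<le> 3.2" using pi_approx by simp_all
  have "3.14^2 \<le> pi^2" using p1 by (intro power_mono) simp_all
  moreover have "pi^2 \<le> 3.2^2" using p1 by (intro power_mono) simp_all
  ultimately have a: "0 \<le> 5 - pi^2/3" "5 - pi^2/3 \<le> (55/42)^2" by (simp_all add: power2_eq_square)
  show "0 \<le> theta" unfolding theta_def using a by simp
  have "sqrt (5 - pi^2/3) \<le> sqrt ((55/42)^2)" by (rule real_sqrt_le_mono[OF a(2)])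
  then show "theta \<le> 55/42" unfolding theta_def by simp
qed

lemma Q_nonneg:
  fixes t w e :: real
  assumes eq: "e = w^2 + t^2 - 2*t" and eb: "\<bar>e\<bar> \<le> 1/1000" and w0: "0 \<le> w"
  shows "0 \<le> (e+t)^2 + (39/20)*t^2 - (4/3)*t^3 + (19/20)*w^2 - (11/6)*w^3"
proof (cases "w \<le> 1/2")
  case True
  have h: "0 \<le> (19/20)*w^2 - (11/6)*w^3"
  proof -
    have "0 \<le> w^2 * (19/20 - (11/6)*w)" using True w0 by simp
    then show ?thesis by (simp add: algebra_simps power3_eq_cube power2_eq_square)
  qed
  show ?thesis
  proof (cases "t \<le> 1")
    case True
    have "0 \<le> t^2 * (39/20 - (4/3)*t)" using True by simp
    then have "0 \<le> (39/20)*t^2 - (4/3)*t^3" by (simp add: algebra_simps power3_eq_cube power2_eq_square)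
    moreover have "0 \<le> (e+t)^2" by simp
    ultimately show ?thesis using h by linarith
  next
    case False
    have "t^2 - t \<le> e + t" using eq by simp
    moreover have "0 \<le> t^2 - t" using False by (simp add: power2_eq_square)
    ultimately have "(t^2 - t)^2 \<le> (e+t)^2" by (intro power_mono) simp_all
    moreover have "0 \<le> t^2 * ((t - 5/3)^2 + 31/180)" by simp
    ultimately have "0 \<le> (e+t)^2 + (39/20)*t^2 - (4/3)*t^3"
      by (simp add: algebra_simps power3_eq_cube power2_eq_square)
    then show ?thesis using h by linarith
  qed
next
  case False
  have "(1/2)^2 \<le> w^2" using False by (intro power_mono) simp_all
  then have wsq: "1/4 \<le> w^2" by (simp add: power2_eq_square)
  have "(t - 1)^2 = 1 + e - w^2" using eq by (simp add: power2_eq_square algebra_simps)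
  moreover have eu: "e \<le> 1/1000" using eb by simp
  ultimately have "(t - 1)^2 \<le> (7/8)^2" using wsq by (simp add: power2_eq_square)
  then have "\<bar>t - 1\<bar> \<le> 7/8" using abs_le_square_iff[of "t - 1" "7/8"] by simp
  then have tb: "1/8 \<le> t" "t \<le> 15/8" by linarith+
  define v where "v = 2*t - t^2 + 1/1000"
  have wv: "w^2 \<le> v" unfolding v_def using eq eu by linarith
  define B where "B = 19/20 - (11/12)*(v/(4/5) + 4/5)"
  have "w \<le> (w^2/(4/5) + 4/5)/2"
  proof -
    have "0 \<le> (w - 4/5)^2" by simp
    then show ?thesis by (simp add: power2_eq_square algebra_simps)
  qed
  also have "\<dots> \<le> (v/(4/5) + 4/5)/2" using wv by simp
  finally have wle: "w \<le> (v/(4/5) + 4/5)/2" .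
  have hB: "w^2 * B \<le> (19/20)*w^2 - (11/6)*w^3"
  proof -
    have "w^2 * w \<le> w^2 * ((v/(4/5) + 4/5)/2)" using mult_left_mono[OF wle, of "w^2"] by simp
    then show ?thesis unfolding B_def by (simp add: algebra_simps power3_eq_cube power2_eq_square)
  qed
  have et: "t^2 - 2*t/1000 \<le> (e+t)^2"
  proof -
    have "-(1/1000) \<le> e" using eb by simp
    then have "t * (-(1/1000)) \<le> t * e" using tb by (intro mult_left_mono) simp_all
    then have "-(t/1000) \<le> t*e" by simp
    then show ?thesis by (simp add: power2_eq_square algebra_simps)
  qed
  have base: "0 \<le> (59/20)*t^2 - (4/3)*t^3 - 4/1000"
  proof -
    have "(1/8)^2 \<le> t^2" using tb by (intro power_mono) simp_all
    moreover have "0 \<le> t^2" by simp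
    ultimately have "(1/8)^2 * (59/20 - (4/3)*(15/8)) \<le> t^2 * (59/20 - (4/3)*t)"
      using tb by (intro mult_mono) simp_all
    then show ?thesis by (simp add: algebra_simps power3_eq_cube power2_eq_square)
  qed
  show ?thesis
  proof (cases "0 \<le> B")
    case True
    have "0 \<le> w^2 * B" using True by simp
    then show ?thesis using hB et base tb by linarith
  next
    case False
    have "v * B \<le> w^2 * B" using False wv by (simp add: mult_right_mono_neg)
    moreover have "pp t = (59/20)*t^2 - (4/3)*t^3 - 4/1000 + v * B"
      unfolding pp_def B_def v_def by (simp add: field_simps power2_eq_square power3_eq_cube power4_eq_xxxx)
    ultimately show ?thesis using hB et pp_nonneg[OF tb] tb by linarith
  qed
qed

theorem lemma2p6:
  shows "\<exists>\<delta>2 > 0. \<exists>\<delta>3 > 0. \<forall>\<delta>::real. 0 < \<delta> \<and> \<delta> < \<delta>2 \<longrightarrow>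
           (\<forall>Z1 Z2::real. \<bar>Efun Z1 Z2\<bar> \<le> \<delta>3 \<longrightarrow> Pfun \<delta> Z1 Z2 - \<bar>Efun Z1 Z2\<bar>^2 \<le> 0)"
proof (intro exI[of _ "1/1000"] conjI allI impI)
  fix \<delta> Z1 Z2 :: real
  assume d: "0 < \<delta> \<and> \<delta> < 1/1000" and eb: "\<bar>Efun Z1 Z2\<bar> \<le> 1/1000"
  define e where "e = Efun Z1 Z2"
  define c where "c = (21/20) * theta"
  define s where "s = Z1^2 + Z2^2"
  define w where "w = \<bar>Z2\<bar>"
  have c: "0 \<le> c" "c \<le> 11/8" unfolding c_def using theta_bounds by simp_all
  have eZ: "e = Z1^2 + Z2^2 + 2*Z1" unfolding e_def Efun_def by simp
  have w2: "w^2 = Z2^2" unfolding w_def by simp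
  have w0: "0 \<le> w" unfolding w_def by simp
  have Z13: "(Z1+1)^2 + Z2^2 \<le> 2"
  proof -
    have "e \<le> 1" using eb e_def by simp
    then show ?thesis using eZ by (simp add: power2_eq_square algebra_simps)
  qed
  have aZ1: "\<bar>Z1\<bar> \<le> 3"
  proof -
    have "0 \<le> Z2^2" by simp
    then have "(Z1+1)^2 \<le> 4" using Z13 by linarith
    then have "(Z1+1)^2 \<le> 2^2" by simp
    then have "\<bar>Z1+1\<bar> \<le> 2" using abs_le_square_iff[of "Z1+1" 2] by simp
    then show ?thesis by linarith
  qed
  have w2b: "w \<le> 2"
  proof -
    have "0 \<le> (Z1+1)^2" by simp
    then have "w^2 \<le> 4" using Z13 w2 by linarith
    then have "w^2 \<le> 2^2" by simp
    then show ?thesis using w0 abs_le_square_iff[of w 2] by simp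
  qed
  define D where "D = s + 6*(\<bar>Z1\<bar>*Z2^2 + \<bar>Z1\<bar>^3) + 2*Z2^2 + 2*(c*Z2^3)"
  define P0 where "P0 = s + 2*Z1*Z2^2 + (2/3)*Z1^3 - 2*Z2^2 + (4/3)*c*Z2^3"
  have Pd: "Pfun \<delta> Z1 Z2 = P0 + \<delta> * D"
    unfolding Pfun_def P0_def D_def s_def c_def by (simp add: algebra_simps power3_eq_cube power2_eq_square)
  have Z23: "Z2^3 \<le> w^3"
  proof -
    have "Z2^3 \<le> \<bar>Z2^3\<bar>" by simp
    then show ?thesis unfolding w_def by (simp add: power_abs)
  qed
  have Z23': "\<bar>Z2^3\<bar> \<le> 2 * Z2^2"
  proof -
    have "\<bar>Z2^3\<bar> = w * w^2" unfolding w_def by (simp add: power3_eq_cube power2_eq_square abs_mult)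
    also have "\<dots> \<le> 2 * w^2" using w2b by (simp add: mult_right_mono)
    finally show ?thesis using w2 by simp
  qed
  have P0le: "P0 \<le> s + 2*Z1*Z2^2 + (2/3)*Z1^3 - 2*Z2^2 + (11/6)*w^3"
  proof -
    have "(4/3)*c*Z2^3 \<le> (4/3)*c*w^3" using Z23 c by (simp add: mult_left_mono)
    also have "\<dots> \<le> (4/3)*(11/8)*w^3" using c w0 by (intro mult_right_mono) simp_all
    finally show ?thesis unfolding P0_def by simp
  qed
  have Qid: "e^2 - (s + 2*Z1*Z2^2 + (2/3)*Z1^3 - 2*Z2^2 + (11/6)*w^3) - s/20
      = (e + (-Z1))^2 + (39/20)*(-Z1)^2 - (4/3)*(-Z1)^3 + (19/20)*w^2 - (11/6)*w^3"
    unfolding eZ s_def w2 by algebra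
  have Qn: "0 \<le> (e + (-Z1))^2 + (39/20)*(-Z1)^2 - (4/3)*(-Z1)^3 + (19/20)*w^2 - (11/6)*w^3"
    by (rule Q_nonneg) (use eZ w2 eb e_def w0 in simp_all)
  have Db: "D \<le> 27 * s"
  proof -
    have a1: "\<bar>Z1\<bar>*Z2^2 \<le> 3 * Z2^2" using aZ1 by (simp add: mult_right_mono)
    have a2: "\<bar>Z1\<bar>^3 \<le> 3 * Z1^2"
    proof -
      have "\<bar>Z1\<bar>^3 = \<bar>Z1\<bar> * Z1^2" by (simp add: power3_eq_cube power2_eq_square abs_mult)
      also have "\<dots> \<le> 3 * Z1^2" using aZ1 by (simp add: mult_right_mono)
      finally show ?thesis .
    qed
    have a3: "c * Z2^3 \<le> (11/8) * (2 * Z2^2)"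
    proof -
      have "c * Z2^3 \<le> c * \<bar>Z2^3\<bar>" using c by (simp add: mult_left_mono)
      also have "\<dots> \<le> (11/8) * (2 * Z2^2)" using c Z23' by (intro mult_mono) simp_all
      finally show ?thesis .
    qed
    have gen: "(x + y) + 6*(a + b) + 2*y + 2*d \<le> 27*(x+y)"
      if "0 \<le> x" "0 \<le> y" "a \<le> 3*y" "b \<le> 3*x" "d \<le> 11/8*(2*y)" for a b d x y :: real
      using that by (simp add: algebra_simps)
    show ?thesis unfolding D_def s_def by (rule gen[OF _ _ a1 a2 a3]) simp_all
  qed
  have s0: "0 \<le> s" unfolding s_def by simp
  have "\<delta> * D \<le> \<delta> * (27 * s)" using Db d by (simp add: mult_left_mono)
  also have "\<dots> \<le> (1/1000) * (27 * s)" using d s0 by (intro mult_right_mono) simp_all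
  finally have dD: "\<delta> * D \<le> 27/1000 * s" by simp
  have "Pfun \<delta> Z1 Z2 - \<bar>Efun Z1 Z2\<bar>^2 = P0 + \<delta> * D - e^2" using Pd e_def by simp
  also have "\<dots> \<le> 0" using P0le Qid Qn dD s0 by linarith
  finally show "Pfun \<delta> Z1 Z2 - \<bar>Efun Z1 Z2\<bar>^2 \<le> 0" .
qed simp_all

end
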